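(* Let $\Gamma$ be a balanced two-dimensional simplicial complex, and let $W\subseteq V(\Gamma)$ be such that $\tilde H_2(\Gamma[W];\mathbf{k})\neq 0$ but $\tilde H_2(\Gamma[W'];\mathbf{k})=0$ for every proper subset $W'\subsetneq W$. Then $f_2(\Gamma[W])\ge 2|W|-4$.
   Context: A simplicial complex $\Gamma$ on a finite vertex set $V=V(\Gamma)$ is a family of subsets of $V$ (faces) closed under taking subsets; its dimension is $\max\{|F|:F\in\Gamma\}-1$; $f_2$ counts faces with 3 elements. For $W\subseteq V$, $\Gamma[W]=\{F\in\Gamma:F\subseteq W\}$. A two-dimensional complex is balanced if its vertex set can be partitioned into three sets $V_1,V_2,V_3$ such that every face contains at most one vertex from each $V_j$. Fix a field $\mathbf{k}$; $\tilde H_j(\cdot;\mathbf{k})$ is reduced simplicial homology. *)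

theory Defs
  imports Main
begin

definition simplicial_complex :: "'a set set \<Rightarrow> bool" where
  "simplicial_complex \<Gamma> \<longleftrightarrow> finite \<Gamma> \<and> (\<forall>F\<in>\<Gamma>. finite F) \<and>
     (\<forall>F\<in>\<Gamma>. \<forall>G. G \<subseteq> F \<longrightarrow> G \<in> \<Gamma>)"

definition vertices :: "'a set set \<Rightarrow> 'a set" where
  "vertices \<Gamma> = \<Union>\<Gamma>"

text \<open>Dimension = max card of a face minus 1; "two-dimensional" = max face size 3.\<close>
definition two_dimensional :: "'a set set \<Rightarrow> bool" where
  "two_dimensional \<Gamma> \<longleftrightarrow> (\<forall>F\<in>\<Gamma>. card F \<le> 3) \<and> (\<exists>F\<in>\<Gamma>. card F = 3)"

definition balanced2 :: "'a set set \<Rightarrow> bool" where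
  "balanced2 \<Gamma> \<longleftrightarrow> (\<exists>V1 V2 V3. V1 \<union> V2 \<union> V3 = vertices \<Gamma> \<and>
     V1 \<inter> V2 = {} \<and> V1 \<inter> V3 = {} \<and> V2 \<inter> V3 = {} \<and>
     (\<forall>F\<in>\<Gamma>. card (F \<inter> V1) \<le> 1 \<and> card (F \<inter> V2) \<le> 1 \<and> card (F \<inter> V3) \<le> 1))"

definition induced :: "'a set set \<Rightarrow> 'a set \<Rightarrow> 'a set set" where
  "induced \<Gamma> W = {F \<in> \<Gamma>. F \<subseteq> W}"

definition f2 :: "'a set set \<Rightarrow> nat" where
  "f2 \<Gamma> = card {F \<in> \<Gamma>. card F = 3}"

text \<open>Faces are oriented by the linear
  order on vertices.
  Faces of dimension -1 (the empty face) are included, so the homology is reduced.\<close>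
definition chains :: "'k::field itself \<Rightarrow> 'a set set \<Rightarrow> nat \<Rightarrow> ('a set \<Rightarrow> 'k) set" where
  "chains _ \<Gamma> j = {c. \<forall>F. c F \<noteq> 0 \<longrightarrow> F \<in> \<Gamma> \<and> card F = j + 1}"

definition incidence_sign :: "'a::linorder set \<Rightarrow> 'a \<Rightarrow> 'k::field" where
  "incidence_sign F v = (-1) ^ card {u \<in> F. u < v}"

text \<open>Boundary map from j-chains to (j-1)-chains (for j = 0: the augmentation onto the
  empty face).\<close>
definition boundary :: "'a::linorder set set \<Rightarrow> nat \<Rightarrow> ('a set \<Rightarrow> 'k::field) \<Rightarrow> ('a set \<Rightarrow> 'k)" where
  "boundary \<Gamma> j c = (\<lambda>G. if G \<in> \<Gamma> \<and> card G = j then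
      (\<Sum>F\<in>{F \<in> \<Gamma>. card F = j + 1 \<and> G \<subseteq> F}. incidence_sign F (the_elem (F - G)) * c F)
    else 0)"

definition reduced_homology_nonzero ::
  "'k::field itself \<Rightarrow> 'a::linorder set set \<Rightarrow> nat \<Rightarrow> bool" where
  "reduced_homology_nonzero K \<Gamma> j \<longleftrightarrow>
     (\<exists>z \<in> chains K \<Gamma> j. boundary \<Gamma> j z = (\<lambda>_. 0) \<and>
        z \<notin> boundary \<Gamma> (Suc j) ` chains K \<Gamma> (Suc j))"

end

theory Submission
  imports Defs "HOL-Library.Function_Algebras" "HOL.Vector_Spaces"
begin


definition sc :: "'k::field \<Rightarrow> ('b \<Rightarrow> 'k) \<Rightarrow> ('b \<Rightarrow> 'k)" where
  "sc c f = (\<lambda>x. c * f x)"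

interpretation vs: vector_space "sc :: 'k::field \<Rightarrow> ('b \<Rightarrow> 'k) \<Rightarrow> _"
  by unfold_locales (auto simp: sc_def fun_eq_iff algebra_simps)

lemma sum_fun_apply: "(\<Sum>i\<in>I. f i) x = (\<Sum>i\<in>I. f i x)"
  by (induction I rule: infinite_finite_induct) auto

lemma sc_apply: "sc c f x = c * f x" by (simp add: sc_def)

lemma fam_indep:
  fixes f :: "'i \<Rightarrow> ('b \<Rightarrow> 'k::field)"
  assumes fin: "finite I" and h: "\<And>c. (\<Sum>i\<in>I. sc (c i) (f i)) = 0 \<Longrightarrow> \<forall>i\<in>I. c i = 0"
  shows "inj_on f I \<and> vs.independent (f ` I)"
proof
  show inj: "inj_on f I"
  proof (rule inj_onI, rule ccontr)
    fix i j assume ij: "i \<in> I" "j \<in> I" "f i = f j" "i \<noteq> j"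
    define c where "c = (\<lambda>k. if k = i then (1::'k) else if k = j then -1 else 0)"
    have "(\<Sum>k\<in>I. sc (c k) (f k)) = (\<Sum>k\<in>{i,j}. sc (c k) (f k))"
      by (rule sum.mono_neutral_right) (use fin ij in \<open>auto simp: c_def sc_def fun_eq_iff\<close>)
    also have "\<dots> = 0" using ij by (simp add: c_def sc_def fun_eq_iff)
    finally have "\<forall>k\<in>I. c k = 0" by (rule h)
    then have "c i = 0" using ij by blast
    thus False by (simp add: c_def)
  qed
  show "vs.independent (f ` I)"
  proof
    assume "vs.dependent (f ` I)"
    then obtain u where u: "\<exists>v\<in>f ` I. u v \<noteq> 0" "(\<Sum>v\<in>f ` I. sc (u v) v) = 0"
      using vs.dependent_finite[of "f ` I"] fin by auto
    have "(\<Sum>i\<in>I. sc (u (f i)) (f i)) = 0"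
      using u(2) by (simp add: sum.reindex[OF inj])
    then have "\<forall>i\<in>I. u (f i) = 0" by (rule h)
    with u(1) show False by auto
  qed
qed

definition chi :: "'b \<Rightarrow> 'b \<Rightarrow> 'k::field" where
  "chi G = (\<lambda>H. if H = G then 1 else 0)"

definition delta :: "'a \<Rightarrow> 'a \<Rightarrow> 'k::field" where
  "delta u = (\<lambda>v. if v = u then 1 else 0)"

definition Lmap :: "'a::linorder set \<Rightarrow> ('a set \<Rightarrow> 'k::field) \<Rightarrow> ('a \<Rightarrow> 'k)" where
  "Lmap V f = (\<lambda>v. \<Sum>x\<in>V-{v}. if x < v then f {x,v} else - f {x,v})"

lemma Lmap_add: "Lmap V (f + g) = Lmap V f + Lmap V g"
  unfolding Lmap_def plus_fun_apply
  apply (rule ext) apply (subst sum.distrib[symmetric]) apply (rule sum.cong) by auto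

lemma Lmap_sc: "Lmap V (sc c f) = sc c (Lmap V f)"
  unfolding Lmap_def sc_def
  apply (rule ext) apply (subst sum_distrib_left) apply (rule sum.cong) by auto

lemma Lmap_zero: "Lmap V 0 = 0"
  by (rule ext) (simp add: Lmap_def cong: if_cong)

lemma Lmap_sum: "Lmap V (\<Sum>i\<in>I. sc (c i) (f i)) = (\<Sum>i\<in>I. sc (c i) (Lmap V (f i)))"
proof (induction I rule: infinite_finite_induct)
  case (infinite A) then show ?case by (metis sum.infinite Lmap_zero)
next
  case empty show ?case by (simp only: sum.empty Lmap_zero)
next
  case (insert x F) then show ?case by (simp only: sum.insert[OF insert(1,2)] Lmap_add Lmap_sc insert(3))
qed

lemma bd_add: "boundary D j (f + g) = boundary D j f + boundary D j g"
  unfolding boundary_def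
  by (rule ext) (simp add: sum.distrib[symmetric] distrib_left plus_fun_def)

lemma bd_sc: "boundary D j (sc c f) = sc c (boundary D j f)"
  unfolding boundary_def sc_def
  by (rule ext) (simp add: sum_distrib_left mult.left_commute)

lemma bd_zero: "boundary D j (\<lambda>_. 0) = (\<lambda>_. 0)"
  by (auto simp: boundary_def fun_eq_iff)

lemma bd_zero': "boundary D j 0 = 0"
  using bd_zero[of D j] by (simp add: zero_fun_def)

lemma bd_sum: "boundary D j (\<Sum>i\<in>I. sc (c i) (f i)) = (\<Sum>i\<in>I. sc (c i) (boundary D j (f i)))"
proof (induction I rule: infinite_finite_induct)
  case (infinite A) then show ?case by (metis sum.infinite bd_zero')
next
  case empty show ?case by (simp only: sum.empty bd_zero')
next
  case (insert x F) then show ?case by (simp only: sum.insert[OF insert(1,2)] bd_add bd_sc insert(3))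
qed

lemma Lmap_chi_edge:
  fixes u w :: "'a::linorder"
  assumes "u \<noteq> w" "u \<in> V" "w \<in> V" "finite V"
  shows "Lmap V (chi {u,w}) = sc (if u < w then 1 else -1) (delta w - delta u :: 'a \<Rightarrow> 'k::field)"
proof (rule ext)
  fix v
  have e: "\<And>x. ({x,v} = {u,w}) = ((x = u \<and> v = w) \<or> (x = w \<and> v = u))"
    using assms(1) by (auto simp: doubleton_eq_iff)
  show "Lmap V (chi {u,w}) v = sc (if u < w then 1 else -1) (delta w - delta u :: 'a \<Rightarrow> 'k) v"
  proof (cases "v = w \<or> v = u")
    case True
    then show ?thesis
    proof
      assume v: "v = w"
      have "Lmap V (chi {u,w}) v = (\<Sum>x\<in>V-{v}. if x = u then (if u < w then 1 else -1) else (0::'k))"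
        unfolding Lmap_def chi_def using v assms(1) by (intro sum.cong) (auto simp: e)
      also have "\<dots> = (if u < w then 1 else -1)" using assms v by (subst sum.delta) auto
      finally show ?thesis using v assms(1) by (simp add: delta_def)
    next
      assume v: "v = u"
      have "Lmap V (chi {u,w}) v = (\<Sum>x\<in>V-{v}. if x = w then (if w < u then 1 else -1) else (0::'k))"
        unfolding Lmap_def chi_def using v assms(1) by (intro sum.cong) (auto simp: e)
      also have "\<dots> = (if w < u then 1 else -1)" using assms v by (subst sum.delta) auto
      finally show ?thesis using v assms(1) by (auto simp: delta_def)
    qed
  next
    case False
    then have "\<And>x. {x,v} \<noteq> {u,w}" by (auto simp: e)
    then show ?thesis unfolding Lmap_def chi_def delta_def using False by (simp cong: if_cong)
  qed
qed



lemma card3_sorted: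
  fixes T :: "'a::linorder set" assumes "card T = 3"
  obtains a b c where "a < b" "b < c" "T = {a,b,c}"
proof -
  have fin: "finite T" using assms card.infinite by force
  define xs where "xs = sorted_list_of_set T"
  have l: "length xs = 3" using assms fin by (simp add: xs_def)
  have s: "sorted_wrt (<) xs" by (simp add: xs_def)
  have st: "set xs = T" using fin by (simp add: xs_def)
  obtain a b c where xs: "xs = [a,b,c]" using l
    by (metis length_0_conv length_Suc_conv numeral_3_eq_3)
  show ?thesis using s st xs that by auto
qed

lemma dd_zero:
  fixes T :: "'a::linorder set"
  assumes T3: "card T = 3" and TV: "T \<subseteq> V" and finV: "finite V"
  shows "Lmap V (\<lambda>G. if card G = 2 \<and> G \<subseteq> T then (incidence_sign T (the_elem (T - G)) :: 'k::field) else 0) = 0"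
proof -
  define g where "g = (\<lambda>G. if card G = 2 \<and> G \<subseteq> T then (incidence_sign T (the_elem (T - G)) :: 'k::field) else 0)"
  obtain a b c where abc: "a < b" "b < c" and T: "T = {a,b,c}" using card3_sorted[OF T3] by blast
  have s_a: "incidence_sign T a = (1::'k)"
  proof -
    have e: "{u \<in> T. u < a} = {}" using abc T by auto
    show ?thesis unfolding incidence_sign_def e by simp
  qed
  have s_b: "incidence_sign T b = (-1::'k)"
  proof -
    have e: "{u \<in> T. u < b} = {a}" using abc T by auto
    show ?thesis unfolding incidence_sign_def e by simp
  qed
  have s_c: "incidence_sign T c = (1::'k)"
  proof -
    have e: "{u \<in> T. u < c} = {a,b}" using abc T by auto
    show ?thesis unfolding incidence_sign_def e using abc by simp
  qed
  have gab: "g {a,b} = 1" "g {b,a} = 1"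
  proof -
    have "T - {a,b} = {c}" using abc T by auto
    thus "g {a,b} = 1" using abc T s_c by (simp add: g_def)
    thus "g {b,a} = 1" by (simp add: insert_commute)
  qed
  have gac: "g {a,c} = -1" "g {c,a} = -1"
  proof -
    have "T - {a,c} = {b}" using abc T by auto
    thus "g {a,c} = -1" using abc T s_b by (simp add: g_def)
    thus "g {c,a} = -1" by (simp add: insert_commute)
  qed
  have gbc: "g {b,c} = 1" "g {c,b} = 1"
  proof -
    have "T - {b,c} = {a}" using abc T by auto
    thus "g {b,c} = 1" using abc T s_a by (simp add: g_def)
    thus "g {c,b} = 1" by (simp add: insert_commute)
  qed
  have ord: "\<not> b < a" "\<not> c < a" "\<not> c < b" "a < c" using abc by auto
  have gout: "\<And>x v. \<not> {x,v} \<subseteq> T \<Longrightarrow> g {x,v} = 0" unfolding g_def by auto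
  have "Lmap V g v = 0" for v
  proof -
    define h where "h = (\<lambda>x. if x < v then g {x,v} else - g {x,v})"
    have L: "Lmap V g v = (\<Sum>x\<in>V-{v}. h x)" by (simp add: Lmap_def h_def)
    show ?thesis
    proof (cases "v \<in> T")
      case False
      then have "\<And>x. h x = 0" using gout by (simp add: h_def)
      then show ?thesis using L by simp
    next
      case True
      have "(\<Sum>x\<in>V-{v}. h x) = (\<Sum>x\<in>T-{v}. h x)"
        by (rule sum.mono_neutral_right) (use finV TV True gout in \<open>auto simp: h_def\<close>)
      moreover have "(\<Sum>x\<in>T-{v}. h x) = 0"
      proof -
        consider "v = a" | "v = b" | "v = c" using True T by auto
        then show ?thesis
        proof cases
          case 1
          then have "T - {v} = {b,c}" using T abc by auto
          then show ?thesis using 1 abc ord gab gac by (simp add: h_def)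
        next
          case 2
          then have "T - {v} = {a,c}" using T abc by auto
          then show ?thesis using 2 abc ord gab gbc by (simp add: h_def)
        next
          case 3
          then have "T - {v} = {a,b}" using T abc by auto
          then show ?thesis using 3 abc ord gbc gac by (simp add: h_def)
        qed
      qed
      ultimately show ?thesis using L by simp
    qed
  qed
  then show ?thesis unfolding g_def[symmetric] by (simp add: fun_eq_iff)
qed



lemma bd_chi:
  fixes D :: "'a::linorder set set"
  assumes cx: "simplicial_complex D" and TD: "T \<in> D" and T3: "card T = 3"
  shows "boundary D 2 (chi T :: 'a set \<Rightarrow> 'k::field) =
     (\<lambda>G. if card G = 2 \<and> G \<subseteq> T then incidence_sign T (the_elem (T - G)) else 0)"
proof (rule ext)
  fix G
  have sub: "\<And>F G. F \<in> D \<Longrightarrow> G \<subseteq> F \<Longrightarrow> G \<in> D" and finD: "finite D"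
    using cx by (auto simp: simplicial_complex_def)
  show "boundary D 2 (chi T :: 'a set \<Rightarrow> 'k) G =
     (if card G = 2 \<and> G \<subseteq> T then incidence_sign T (the_elem (T - G)) else 0)"
  proof (cases "G \<in> D \<and> card G = 2")
    case True
    define A where "A = {F \<in> D. card F = 2 + 1 \<and> G \<subseteq> F}"
    have finA: "finite A" using finD by (simp add: A_def)
    have "boundary D 2 (chi T :: 'a set \<Rightarrow> 'k) G = (\<Sum>F\<in>A. incidence_sign F (the_elem (F - G)) * chi T F)"
      using True by (simp add: boundary_def A_def)
    also have "\<dots> = (\<Sum>F\<in>A. if F = T then incidence_sign T (the_elem (T - G)) else 0)"
      by (rule sum.cong) (auto simp: chi_def)
    also have "\<dots> = (if T \<in> A then incidence_sign T (the_elem (T - G)) else 0)"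
      using finA by (simp add: sum.delta)
    finally show ?thesis using True TD T3 by (auto simp: A_def)
  next
    case False
    then show ?thesis using sub[OF TD] by (auto simp: boundary_def)
  qed
qed

lemma span_support:
  fixes f :: "'b \<Rightarrow> 'k::field"
  assumes "finite E" "\<And>G. G \<notin> E \<Longrightarrow> f G = 0"
  shows "f \<in> vs.span (chi ` E)"
proof -
  have "f = (\<Sum>G\<in>E. sc (f G) (chi G))"
  proof (rule ext)
    fix x
    have "(\<Sum>G\<in>E. sc (f G) (chi G)) x = (\<Sum>G\<in>E. if x = G then f x else 0)"
      unfolding sum_fun_apply by (intro sum.cong) (auto simp: sc_apply chi_def)
    also have "\<dots> = f x" using assms by (simp add: sum.delta')
    finally show "f x = (\<Sum>G\<in>E. sc (f G) (chi G)) x" by simp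
  qed
  also have "\<dots> \<in> vs.span (chi ` E)" by (intro vs.span_sum vs.span_scale vs.span_base) auto
  finally show ?thesis .
qed

lemma card_filter_sum: "finite A \<Longrightarrow> card {x\<in>A. P x} = (\<Sum>x\<in>A. if P x then 1 else 0)"
  by (simp add: sum.inter_filter[symmetric])



lemma key:
  fixes D :: "'a::linorder set set" and z :: "'a set \<Rightarrow> 'k::field"
  assumes cx: "simplicial_complex D"
    and zc: "z \<in> chains TYPE('k) D 2"
    and zcyc: "boundary D 2 z = (\<lambda>_. 0)"
    and znz: "z \<noteq> (\<lambda>_. 0)"
    and zmin: "\<And>y. y \<in> chains TYPE('k) D 2 \<Longrightarrow> boundary D 2 y = (\<lambda>_. 0) \<Longrightarrow> y \<noteq> (\<lambda>_. 0)
        \<Longrightarrow> card {F. z F \<noteq> 0} \<le> card {F. y F \<noteq> 0}"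
  shows "2 * card (\<Union>{F. z F \<noteq> 0}) \<le> card {F. z F \<noteq> 0} + 4"
proof -
  define S where "S = {F. z F \<noteq> 0}"
  have finD: "finite D" and finF: "\<And>F. F \<in> D \<Longrightarrow> finite F"
    and sub: "\<And>F G. F \<in> D \<Longrightarrow> G \<subseteq> F \<Longrightarrow> G \<in> D"
    using cx by (auto simp: simplicial_complex_def)
  have SD: "S \<subseteq> D" and S3: "\<And>F. F \<in> S \<Longrightarrow> card F = 3"
    using zc by (auto simp: S_def chains_def)
  have finS: "finite S" using SD finD finite_subset by blast
  define V where "V = \<Union>S"
  have finV: "finite V" using finS SD finF by (auto simp: V_def)
  define E where "E = {G. card G = 2 \<and> (\<exists>F\<in>S. G \<subseteq> F)}"
  have EV: "E \<subseteq> Pow V" by (auto simp: E_def V_def)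
  have finE: "finite E" using EV finV by (meson finite_Pow_iff finite_subset)
  have Sne: "S \<noteq> {}" using znz by (auto simp: S_def fun_eq_iff)
  have smaller: "y = (\<lambda>_. 0)" if "boundary D 2 y = (\<lambda>_. 0)" "{F. y F \<noteq> 0} \<subset> S" for y :: "'a set \<Rightarrow> 'k"
  proof (rule ccontr)
    assume ne: "y \<noteq> (\<lambda>_. 0)"
    have "y \<in> chains TYPE('k) D 2" using that(2) SD S3 by (auto simp: chains_def)
    from zmin[OF this that(1) ne] have "card S \<le> card {F. y F \<noteq> 0}" by (simp add: S_def)
    moreover have "card {F. y F \<noteq> 0} < card S" using psubset_card_mono[OF finS that(2)] .
    ultimately show False by simp
  qed

  have two: "\<exists>F'\<in>S. F' \<noteq> F \<and> G \<subseteq> F'" if FS: "F \<in> S" and GF: "G \<subseteq> F" and G2: "card G = 2" for F G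
  proof (rule ccontr)
    assume "\<not> ?thesis"
    then have only: "\<And>F'. F' \<in> S \<Longrightarrow> G \<subseteq> F' \<Longrightarrow> F' = F" by blast
    have GD: "G \<in> D" using sub SD FS GF by blast
    define A where "A = {F \<in> D. card F = 2 + 1 \<and> G \<subseteq> F}"
    have finA: "finite A" using finD by (simp add: A_def)
    have FA: "F \<in> A" using FS SD S3 GF by (auto simp: A_def)
    have "boundary D 2 z G = (\<Sum>F'\<in>A. incidence_sign F' (the_elem (F' - G)) * z F')"
      using GD G2 by (simp add: boundary_def A_def)
    also have "\<dots> = (\<Sum>F'\<in>A. if F' = F then incidence_sign F (the_elem (F - G)) * z F else 0)"
    proof (rule sum.cong)
      fix F' assume "F' \<in> A"
      then show "incidence_sign F' (the_elem (F' - G)) * z F' = (if F' = F then incidence_sign F (the_elem (F - G)) * z F else 0)"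
        using only by (auto simp: S_def A_def)
    qed simp
    also have "\<dots> = incidence_sign F (the_elem (F - G)) * z F"
      using finA FA by (simp add: sum.delta)
    finally have "boundary D 2 z G = incidence_sign F (the_elem (F - G)) * z F" .
    moreover have "incidence_sign F (the_elem (F - G)) * z F \<noteq> 0"
      using FS by (simp add: S_def incidence_sign_def)
    ultimately show False using zcyc by (metis)
  qed

  have twoE: "2 * card E \<le> 3 * card S"
  proof -
    have swap: "(\<Sum>G\<in>E. card {F\<in>S. G \<subseteq> F}) = (\<Sum>F\<in>S. card {G\<in>E. G \<subseteq> F})"
      using finS finE by (simp add: card_filter_sum sum.swap[of _ E S])
    have ge2: "2 \<le> card {F\<in>S. G \<subseteq> F}" if GE: "G \<in> E" for G
    proof -
      obtain F where F: "F \<in> S" "G \<subseteq> F" "card G = 2" using GE by (auto simp: E_def)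
      obtain F' where F': "F' \<in> S" "F' \<noteq> F" "G \<subseteq> F'" using two[OF F] by blast
      have "{F, F'} \<subseteq> {F\<in>S. G \<subseteq> F}" using F F' by auto
      from card_mono[OF _ this] have "card {F,F'} \<le> card {F\<in>S. G \<subseteq> F}" using finS by simp
      then show ?thesis using F' by simp
    qed
    have eq3: "card {G\<in>E. G \<subseteq> F} = 3" if "F \<in> S" for F
    proof -
      have "{G\<in>E. G \<subseteq> F} = {G. G \<subseteq> F \<and> card G = 2}" using that by (auto simp: E_def)
      moreover have "finite F" using that SD finF by blast
      ultimately have "card {G\<in>E. G \<subseteq> F} = card F choose 2" using n_subsets[of F 2] by simp
      thus ?thesis using S3[OF that] by (simp add: choose_two)
    qed
    have "2 * card E = (\<Sum>G\<in>E. 2)" by simp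
    also have "\<dots> \<le> (\<Sum>G\<in>E. card {F\<in>S. G \<subseteq> F})" by (rule sum_mono) (rule ge2)
    also have "\<dots> = (\<Sum>F\<in>S. card {G\<in>E. G \<subseteq> F})" by (rule swap)
    also have "\<dots> = (\<Sum>F\<in>S. 3)" by (rule sum.cong) (simp_all add: eq3)
    also have "\<dots> = 3 * card S" by simp
    finally show ?thesis .
  qed

  obtain T0 where T0: "T0 \<in> S" using Sne by blast
  obtain v0 where v0: "v0 \<in> T0" using S3[OF T0] by (metis card.empty all_not_in_conv zero_neq_numeral)
  have v0V: "v0 \<in> V" using T0 v0 by (auto simp: V_def)
  define R where "R = {(x,y). {x,y} \<in> E}"
  define C where "C = {u. (v0,u) \<in> R\<^sup>*}"
  have clos: "y \<in> C" if "F \<in> S" "x \<in> F" "x \<in> C" "y \<in> F" for F x y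
  proof (cases "x = y")
    case False
    have "{x,y} \<in> E" using that False unfolding E_def by auto
    hence "(x,y) \<in> R" by (simp add: R_def)
    thus ?thesis using that(3) by (auto simp: C_def intro: rtrancl_into_rtrancl)
  qed (use that in auto)
  have T0C: "T0 \<subseteq> C"
  proof
    fix y assume "y \<in> T0"
    moreover have "v0 \<in> C" by (simp add: C_def)
    ultimately show "y \<in> C" using clos[OF T0 v0] by blast
  qed
  have conn: "V \<subseteq> C"
  proof (rule ccontr)
    assume "\<not> V \<subseteq> C"
    then obtain u1 F1 where F1: "F1 \<in> S" "u1 \<in> F1" "u1 \<notin> C" by (auto simp: V_def)
    define z' where "z' = (\<lambda>F. if F \<subseteq> C then z F else 0)"
    have "boundary D 2 z' = (\<lambda>_. 0)"
    proof (rule ext)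
      fix G
      show "boundary D 2 z' G = 0"
      proof (cases "G \<in> D \<and> card G = 2")
        case False thus ?thesis unfolding boundary_def by auto
      next
        case True
        define A where "A = {F \<in> D. card F = 2 + 1 \<and> G \<subseteq> F}"
        have eq: "z' F = (if G \<subseteq> C then z F else 0)" if FA: "F \<in> A" for F
        proof (cases "G \<subseteq> C")
          case GC: True
          show ?thesis
          proof (cases "z F = 0")
            case False
            then have FS: "F \<in> S" by (simp add: S_def)
            have "G \<noteq> {}" using True by auto
            then obtain x where x: "x \<in> G" by blast
            have "F \<subseteq> C" using clos[OF FS, of x] x GC FA by (auto simp: A_def)
            thus ?thesis using GC by (simp add: z'_def)
          qed (simp add: z'_def)
        next
          case False
          then have "\<not> F \<subseteq> C" using FA by (auto simp: A_def)
          thus ?thesis using False by (simp add: z'_def)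
        qed
        have "boundary D 2 z' G = (\<Sum>F\<in>A. incidence_sign F (the_elem (F - G)) * z' F)"
          using True by (simp add: boundary_def A_def)
        also have "\<dots> = (if G \<subseteq> C then (\<Sum>F\<in>A. incidence_sign F (the_elem (F - G)) * z F) else 0)"
          by (cases "G \<subseteq> C") (simp_all add: eq)
        also have "\<dots> = (if G \<subseteq> C then boundary D 2 z G else 0)"
          using True by (simp add: boundary_def A_def)
        also have "\<dots> = 0" using zcyc by simp
        finally show ?thesis .
      qed
    qed
    moreover have "{F. z' F \<noteq> 0} \<subset> S"
    proof
      show "{F. z' F \<noteq> 0} \<subseteq> S" by (auto simp: z'_def S_def)
      have "\<not> F1 \<subseteq> C" using F1 by blast
      then have "F1 \<notin> {F. z' F \<noteq> 0}" by (simp add: z'_def)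
      then show "{F. z' F \<noteq> 0} \<noteq> S" using F1 by blast
    qed
    ultimately have "z' = (\<lambda>_. 0)" by (rule smaller)
    moreover have "z' T0 \<noteq> 0" using T0 T0C by (simp add: z'_def S_def)
    ultimately show False by simp
  qed

  define P where "P = (\<lambda>G. Lmap V (chi G :: 'a set \<Rightarrow> 'k)) ` E"
  obtain B where B: "B \<subseteq> P" "vs.independent B" "P \<subseteq> vs.span B"
    using vs.maximal_independent_subset[of P] by blast
  have finB: "finite B" using B(1) finE unfolding P_def by (meson finite_imageI finite_subset)
  have path: "delta u - delta v0 \<in> vs.span P" if "(v0,u) \<in> R\<^sup>*" for u
    using that
  proof (induction rule: rtrancl_induct)
    case base show ?case by (simp only: diff_self vs.span_zero)
  next
    case (step u w)
    then have uw: "{u,w} \<in> E" by (simp add: R_def)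
    then have "u \<noteq> w" "u \<in> V" "w \<in> V" using EV by (auto simp: E_def)
    have Lm: "Lmap V (chi {u,w}) \<in> P" using uw by (simp add: P_def)
    have "delta w - delta u = sc (if u < w then 1 else -1) (Lmap V (chi {u,w}) :: 'a \<Rightarrow> 'k)"
      unfolding Lmap_chi_edge[OF \<open>u\<noteq>w\<close> \<open>u\<in>V\<close> \<open>w\<in>V\<close> finV] by (rule ext) (simp add: sc_def)
    hence "delta w - delta u \<in> vs.span P" using Lm by (simp add: vs.span_scale vs.span_base)
    hence "(delta w - delta u) + (delta u - delta v0) \<in> vs.span P" using step.IH by (rule vs.span_add)
    moreover have "(delta w - delta u) + (delta u - delta v0) = delta w - (delta v0 :: 'a \<Rightarrow> 'k)"
      by (rule ext) simp
    ultimately show ?case by metis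
  qed
  have Dfam: "inj_on (\<lambda>u. delta u - delta v0 :: 'a \<Rightarrow> 'k) (V - {v0}) \<and>
      vs.independent ((\<lambda>u. delta u - delta v0 :: 'a \<Rightarrow> 'k) ` (V - {v0}))"
  proof (rule fam_indep)
    show "finite (V - {v0})" using finV by simp
    fix c assume h: "(\<Sum>u\<in>V-{v0}. sc (c u) (delta u - delta v0 :: 'a \<Rightarrow> 'k)) = 0"
    show "\<forall>u\<in>V-{v0}. c u = 0"
    proof
      fix w assume w: "w \<in> V - {v0}"
      have "0 = (\<Sum>u\<in>V-{v0}. sc (c u) (delta u - delta v0 :: 'a \<Rightarrow> 'k)) w" using h by simp
      also have "\<dots> = (\<Sum>u\<in>V-{v0}. if w = u then c u else 0)"
        unfolding sum_fun_apply using w by (intro sum.cong) (auto simp: sc_apply delta_def)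
      also have "\<dots> = c w" using w finV by (simp add: sum.delta')
      finally show "c w = 0" by simp
    qed
  qed
  have DsubB: "(\<lambda>u. delta u - delta v0 :: 'a \<Rightarrow> 'k) ` (V - {v0}) \<subseteq> vs.span B"
  proof -
    have "vs.span P \<subseteq> vs.span B" using vs.span_mono[OF B(3)] by (simp add: vs.span_span)
    then show ?thesis using path conn by (auto simp: C_def)
  qed
  have cardVB: "card (V - {v0}) \<le> card B"
    using vs.independent_span_bound[OF finB conjunct2[OF Dfam] DsubB] card_image[OF conjunct1[OF Dfam]]
    by simp
  have "\<forall>b\<in>B. \<exists>G\<in>E. b = Lmap V (chi G)" using B(1) by (auto simp: P_def)
  then obtain g where g: "\<And>b. b \<in> B \<Longrightarrow> g b \<in> E \<and> b = Lmap V (chi (g b))" by metis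
  define Fs where "Fs = g ` B"
  have injg: "inj_on g B" by (metis g inj_onI)
  have cardFs: "card Fs = card B" by (simp add: Fs_def card_image[OF injg])
  have FsE: "Fs \<subseteq> E" using g by (auto simp: Fs_def)
  have finFs: "finite Fs" using finB by (simp add: Fs_def)
  have LFs_indep: "\<forall>G\<in>Fs. c G = 0" if h: "(\<Sum>G\<in>Fs. sc (c G) (Lmap V (chi G) :: 'a \<Rightarrow> 'k)) = 0" for c
  proof -
    have "(\<Sum>b\<in>B. sc (c (g b)) b) = (\<Sum>b\<in>B. sc (c (g b)) (Lmap V (chi (g b))))"
      by (rule sum.cong) (use g in auto)
    also have "\<dots> = (\<Sum>G\<in>Fs. sc (c G) (Lmap V (chi G)))"
      by (simp add: Fs_def sum.reindex[OF injg])
    finally have s0: "(\<Sum>b\<in>B. sc (c (g b)) b) = 0" using h by simp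
    have "\<forall>b\<in>B. c (g b) = 0"
    proof (rule ccontr)
      assume "\<not> (\<forall>b\<in>B. c (g b) = 0)"
      then have "vs.dependent B" unfolding vs.dependent_finite[OF finB]
        using s0 by (intro exI[of _ "\<lambda>b. c (g b)"]) auto
      with B(2) show False by simp
    qed
    then show ?thesis by (simp add: Fs_def)
  qed
  define S' where "S' = S - {T0}"
  define I where "I = Inl ` S' \<union> Inr ` Fs"
  define fC where "fC = (\<lambda>i. case i of Inl T \<Rightarrow> boundary D 2 (chi T) | Inr G \<Rightarrow> (chi G :: 'a set \<Rightarrow> 'k))"
  have finS': "finite S'" using finS by (simp add: S'_def)
  have finI: "finite I" using finS' finFs by (simp add: I_def)
  have bdL: "Lmap V (boundary D 2 (chi T :: 'a set \<Rightarrow> 'k)) = 0" if "T \<in> S" for T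
  proof -
    have "T \<subseteq> V" using that by (auto simp: V_def)
    then show ?thesis unfolding bd_chi[OF cx subsetD[OF SD that] S3[OF that]]
      by (rule dd_zero[OF S3[OF that] _ finV])
  qed
  have Cfam: "inj_on fC I \<and> vs.independent (fC ` I)"
  proof (rule fam_indep[OF finI])
    fix c assume h: "(\<Sum>i\<in>I. sc (c i) (fC i)) = 0"
    define X where "X = (\<Sum>T\<in>S'. sc (c (Inl T)) (boundary D 2 (chi T) :: 'a set \<Rightarrow> 'k))"
    define Y where "Y = (\<Sum>G\<in>Fs. sc (c (Inr G)) (chi G :: 'a set \<Rightarrow> 'k))"
    have split: "(\<Sum>i\<in>I. sc (c i) (fC i)) = X + Y"
      unfolding I_def X_def Y_def using finS' finFs
      by (subst sum.union_disjoint) (auto simp: sum.reindex fC_def)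
    have LX: "Lmap V X = 0"
      unfolding X_def Lmap_sum using bdL by (simp add: S'_def)
    have "Lmap V (X + Y) = 0" using h split by (simp add: Lmap_zero)
    then have "Lmap V Y = 0" using LX by (simp add: Lmap_add)
    then have "(\<Sum>G\<in>Fs. sc (c (Inr G)) (Lmap V (chi G) :: 'a \<Rightarrow> 'k)) = 0"
      by (simp add: Y_def Lmap_sum)
    then have cY: "\<forall>G\<in>Fs. c (Inr G) = 0" by (rule LFs_indep)
    then have "Y = 0" by (simp add: Y_def)
    then have X0: "X = 0" using h split by simp
    define y where "y = (\<Sum>T\<in>S'. sc (c (Inl T)) (chi T :: 'a set \<Rightarrow> 'k))"
    have yval: "y F = (if F \<in> S' then c (Inl F) else 0)" for F
    proof -
      have "y F = (\<Sum>T\<in>S'. if F = T then c (Inl T) else 0)"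
        unfolding y_def sum_fun_apply by (intro sum.cong) (auto simp: sc_apply chi_def)
      also have "\<dots> = (if F \<in> S' then c (Inl F) else 0)" using finS' by (simp add: sum.delta)
      finally show ?thesis .
    qed
    have "boundary D 2 y = X" by (simp add: y_def X_def bd_sum)
    hence "boundary D 2 y = (\<lambda>_. 0)" using X0 by (simp add: zero_fun_def)
    moreover have "{F. y F \<noteq> 0} \<subset> S"
    proof
      show "{F. y F \<noteq> 0} \<subseteq> S" using yval by (auto simp: S'_def split: if_splits)
      have "y T0 = 0" using yval by (simp add: S'_def)
      then show "{F. y F \<noteq> 0} \<noteq> S" using T0 by blast
    qed
    ultimately have "y = (\<lambda>_. 0)" by (rule smaller)
    hence "\<forall>T\<in>S'. c (Inl T) = 0" using yval by (metis)
    then show "\<forall>i\<in>I. c i = 0" using cY by (auto simp: I_def)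
  qed
  have CinSpan: "fC ` I \<subseteq> vs.span (chi ` E)"
  proof
    fix v assume "v \<in> fC ` I"
    then obtain i where i: "i \<in> I" "v = fC i" by blast
    show "v \<in> vs.span (chi ` E)"
    proof (cases i)
      case (Inl T)
      then have TS: "T \<in> S" using i by (auto simp: I_def S'_def)
      have "boundary D 2 (chi T :: 'a set \<Rightarrow> 'k) \<in> vs.span (chi ` E)"
        unfolding bd_chi[OF cx subsetD[OF SD TS] S3[OF TS]]
        by (rule span_support[OF finE]) (use TS in \<open>auto simp: E_def\<close>)
      then show ?thesis using i Inl by (simp add: fC_def)
    next
      case (Inr G)
      then have "G \<in> E" using i FsE by (auto simp: I_def)
      then show ?thesis using i Inr by (simp add: fC_def vs.span_base)
    qed
  qed
  have cardI: "card (fC ` I) \<le> card E"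
    using vs.independent_span_bound[OF finite_imageI[OF finE] conjunct2[OF Cfam] CinSpan]
      card_image_le[OF finE, of "chi :: 'a set \<Rightarrow> 'a set \<Rightarrow> 'k"] by linarith
  have "card (fC ` I) = card I" using Cfam card_image by blast
  also have "card I = card S' + card Fs"
    unfolding I_def using finS' finFs
    by (subst card_Un_disjoint) (auto simp: card_image)
  finally have A1: "card S' + card B \<le> card E" using cardI cardFs by simp
  have cS': "card S' = card S - 1" using T0 finS by (simp add: S'_def)
  have cV: "card (V - {v0}) = card V - 1" using v0V finV by simp
  have "card S \<ge> 1" using T0 finS by (metis One_nat_def Suc_leI card_gt_0_iff empty_iff)
  moreover have "card V \<ge> 1" using v0V finV by (metis One_nat_def Suc_leI card_gt_0_iff empty_iff)
  ultimately have "2 * card V \<le> card S + 4" using A1 cS' cV cardVB twoE by linarith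
  then show ?thesis by (simp add: V_def S_def)
qed



lemma chains3_zero:
  assumes "\<And>F. F \<in> G \<Longrightarrow> card F \<le> 3"
  shows "chains TYPE('k::field) G 3 = {\<lambda>_. 0}"
proof
  show "chains TYPE('k) G 3 \<subseteq> {\<lambda>_. 0}"
  proof
    fix c :: "'a set \<Rightarrow> 'k" assume "c \<in> chains TYPE('k) G 3"
    then have "\<And>F. c F \<noteq> 0 \<Longrightarrow> F \<in> G \<and> card F = 4" by (simp add: chains_def)
    then have "\<And>F. c F = 0" using assms by fastforce
    then show "c \<in> {\<lambda>_. 0}" by auto
  qed
  show "{\<lambda>_. 0} \<subseteq> chains TYPE('k) G 3" by (simp add: chains_def)
qed

theorem mainTheorem16:
  fixes \<Gamma> :: "'a::linorder set set" and W :: "'a set"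
  assumes "simplicial_complex \<Gamma>"
    and "two_dimensional \<Gamma>"
    and "balanced2 \<Gamma>"
    and "W \<subseteq> vertices \<Gamma>"
    and "reduced_homology_nonzero TYPE('k::field) (induced \<Gamma> W) 2"
    and "\<And>W'. W' \<subset> W \<Longrightarrow> \<not> reduced_homology_nonzero TYPE('k) (induced \<Gamma> W') 2"
  shows "int (f2 (induced \<Gamma> W)) \<ge> 2 * int (card W) - 4"
proof -
  define D where "D = induced \<Gamma> W"
  have finG: "finite \<Gamma>" and finFG: "\<And>F. F \<in> \<Gamma> \<Longrightarrow> finite F"
    and subG: "\<And>F G. F \<in> \<Gamma> \<Longrightarrow> G \<subseteq> F \<Longrightarrow> G \<in> \<Gamma>"
    using assms(1) by (auto simp: simplicial_complex_def)
  have cx: "simplicial_complex D"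
    unfolding D_def induced_def simplicial_complex_def using finG finFG subG by auto
  have dim3: "\<And>F. F \<in> \<Gamma> \<Longrightarrow> card F \<le> 3" using assms(2) by (simp add: two_dimensional_def)
  have ch3: "\<And>X. chains TYPE('k) (induced \<Gamma> X) 3 = {\<lambda>_. 0}"
    by (rule chains3_zero) (auto simp: induced_def dim3)
  obtain z0 where z0: "z0 \<in> chains TYPE('k) D 2" "boundary D 2 z0 = (\<lambda>_. 0)"
      "z0 \<notin> boundary D 3 ` chains TYPE('k) D 3"
    using assms(5) unfolding reduced_homology_nonzero_def D_def by (auto simp: numeral_3_eq_3)
  have z0nz: "z0 \<noteq> (\<lambda>_. 0)"
    using z0(3) unfolding D_def ch3 by (auto simp: bd_zero)
  define Pz where "Pz = (\<lambda>y :: 'a set \<Rightarrow> 'k. y \<in> chains TYPE('k) D 2 \<and> boundary D 2 y = (\<lambda>_. 0) \<and> y \<noteq> (\<lambda>_. 0))"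
  have "Pz z0" using z0 z0nz by (simp add: Pz_def)
  from ex_has_least_nat[of Pz z0 "\<lambda>y. card {F. y F \<noteq> 0}", OF this]
  obtain z where z: "Pz z" and zmin: "\<And>y. Pz y \<Longrightarrow> card {F. z F \<noteq> 0} \<le> card {F. y F \<noteq> 0}" by blast
  have zc: "z \<in> chains TYPE('k) D 2" and zcyc: "boundary D 2 z = (\<lambda>_. 0)" and znz: "z \<noteq> (\<lambda>_. 0)"
    using z by (auto simp: Pz_def)
  define S where "S = {F. z F \<noteq> 0}"
  have kk: "2 * card (\<Union>S) \<le> card S + 4"
    unfolding S_def by (rule key[OF cx zc zcyc znz]) (auto simp: Pz_def intro: zmin)
  have SD: "S \<subseteq> D" and S3: "\<And>F. F \<in> S \<Longrightarrow> card F = 3"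
    using zc by (auto simp: S_def chains_def)
  have SW: "\<Union>S \<subseteq> W" using SD by (auto simp: D_def induced_def)
  have SWeq: "\<Union>S = W"
  proof (rule ccontr)
    assume "\<Union>S \<noteq> W"
    then have psub: "\<Union>S \<subset> W" using SW by blast
    define W' where "W' = \<Union>S"
    have "reduced_homology_nonzero TYPE('k) (induced \<Gamma> W') 2"
      unfolding reduced_homology_nonzero_def
    proof (intro bexI conjI)
      show zc': "z \<in> chains TYPE('k) (induced \<Gamma> W') 2"
        using zc by (auto simp: chains_def D_def induced_def W'_def S_def)
      show "boundary (induced \<Gamma> W') 2 z = (\<lambda>_. 0)"
      proof (rule ext)
        fix G
        show "boundary (induced \<Gamma> W') 2 z G = 0"
        proof (cases "G \<in> induced \<Gamma> W' \<and> card G = 2")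
          case True
          have GD: "G \<in> D" using True psub by (auto simp: D_def induced_def W'_def)
          have "boundary (induced \<Gamma> W') 2 z G =
              (\<Sum>F\<in>{F \<in> induced \<Gamma> W'. card F = 2 + 1 \<and> G \<subseteq> F}. incidence_sign F (the_elem (F - G)) * z F)"
            using True by (simp add: boundary_def)
          also have "\<dots> = (\<Sum>F\<in>{F \<in> D. card F = 2 + 1 \<and> G \<subseteq> F}. incidence_sign F (the_elem (F - G)) * z F)"
          proof (rule sum.mono_neutral_left)
            show "finite {F \<in> D. card F = 2 + 1 \<and> G \<subseteq> F}" using cx by (simp add: simplicial_complex_def)
            show "{F \<in> induced \<Gamma> W'. card F = 2 + 1 \<and> G \<subseteq> F} \<subseteq> {F \<in> D. card F = 2 + 1 \<and> G \<subseteq> F}"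
              using psub by (auto simp: D_def induced_def W'_def)
            show "\<forall>F\<in>{F \<in> D. card F = 2 + 1 \<and> G \<subseteq> F} - {F \<in> induced \<Gamma> W'. card F = 2 + 1 \<and> G \<subseteq> F}.
                incidence_sign F (the_elem (F - G)) * z F = 0"
              by (auto simp: D_def induced_def W'_def S_def)
          qed
          also have "\<dots> = boundary D 2 z G" using GD True by (simp add: boundary_def)
          also have "\<dots> = 0" using zcyc by simp
          finally show ?thesis .
        next
          case False
          then show ?thesis unfolding boundary_def by auto
        qed
      qed
      show "z \<notin> boundary (induced \<Gamma> W') (Suc 2) ` chains TYPE('k) (induced \<Gamma> W') (Suc 2)"
        using znz ch3[of W'] by (auto simp: numeral_3_eq_3 bd_zero)
    qed
    with assms(6)[OF psub[folded W'_def]] show False by simp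
  qed
  have finD: "finite D" using cx by (simp add: simplicial_complex_def)
  have "card S \<le> f2 D"
    unfolding f2_def by (rule card_mono) (use finD SD S3 in auto)
  then have "2 * card W \<le> f2 D + 4" using kk SWeq by simp
  then show ?thesis unfolding D_def by linarith
qed

end
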